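(* Let $\Gamma$ be a residually finite countable discrete group and $\Gamma_n\to e$. For $f\in1+pM_r(c_0(\Gamma,\mathbb{Z}_p))$ let $f^{(n)}\in1+pM_r(\mathbb{Z}_p\Gamma^{(n)})$ be its image, where $\Gamma^{(n)}=\Gamma/\Gamma_n$. Then \[ \log_p\det\nolimits_\Gamma f=\lim_{n\to\infty}\log_p\det\nolimits_{\Gamma^{(n)}}f^{(n)}\quad\text{in }\mathbb{Z}_p. \]
   Context: $\Gamma_n\to e$ means a sequence of normal subgroups of finite index in $\Gamma$ such that only the neutral element $e$ lies in infinitely many $\Gamma_n$. $c_0(\Gamma)$ is the $\mathbb{Q}_p$-algebra of formal series $\sum x_\gamma\gamma$, $x_\gamma\in\mathbb{Q}_p$, $|x_\gamma|_p\to0$ as $\gamma\to\infty$ (for each $\varepsilon>0$ only finitely many $|x_\gamma|_p\ge\varepsilon$), with convolution product and norm $\max|x_\gamma|_p$; $c_0(\Gamma,\mathbb{Z}_p)$ the subring of norm $\le1$ elements. For a normal subgroup $N$ the reduction $c_0(\Gamma)\to c_0(\Gamma/N)$, $\sum x_\gamma\gamma\mapsto\sum x_\gamma\,\gamma N$, is applied entrywise to matrices. $\mathrm{tr}_\Gamma:M_r(c_0(\Gamma))\to\mathbb{Q}_p$ sends $(f_{ij})$ to $\sum_i$(coefficient of $e$ in $f_{ii}$). For $u\in1+pM_r(c_0(\Gamma,\mathbb{Z}_p))$, $\log u=-\sum_{\nu\ge1}(1-u)^\nu/\nu$ and $\log_p\det_\Gamma u:=\mathrm{tr}_\Gamma(\log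 u)$ (same definition for the finite groups $\Gamma^{(n)}$). *)

theory Defs
  imports "HOL-Algebra.Algebra" "HOL-Library.Countable_Set"
begin

text \<open>A field of characteristic 0 with an absolute value nv is (isometrically
isomorphic to) Q_p iff nv is a non-archimedean absolute value with nv p = 1/p,
the field is complete for nv and Q is dense in it (Ostrowski + uniqueness of
completions).\<close>

definition nv_cauchy :: "('a::field_char_0 \<Rightarrow> real) \<Rightarrow> (nat \<Rightarrow> 'a) \<Rightarrow> bool" where
  "nv_cauchy nv xs \<longleftrightarrow> (\<forall>e>0. \<exists>N. \<forall>m\<ge>N. \<forall>n\<ge>N. nv (xs m - xs n) < e)"

definition nv_tendsto :: "('a::field_char_0 \<Rightarrow> real) \<Rightarrow> (nat \<Rightarrow> 'a) \<Rightarrow> 'a \<Rightarrow> bool" where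
  "nv_tendsto nv xs L \<longleftrightarrow> (\<lambda>n. nv (xs n - L)) \<longlonglongrightarrow> 0"

definition padic_field :: "nat \<Rightarrow> ('a::field_char_0 \<Rightarrow> real) \<Rightarrow> bool" where
  "padic_field p nv \<longleftrightarrow> Factorial_Ring.prime p
     \<and> (\<forall>x. nv x \<ge> 0) \<and> (\<forall>x. nv x = 0 \<longleftrightarrow> x = 0)
     \<and> (\<forall>x y. nv (x * y) = nv x * nv y)
     \<and> (\<forall>x y. nv (x + y) \<le> max (nv x) (nv y))
     \<and> nv (of_nat p) = 1 / real p
     \<and> (\<forall>xs. nv_cauchy nv xs \<longrightarrow> (\<exists>L. nv_tendsto nv xs L))
     \<and> (\<forall>x. \<forall>e>0. \<exists>q::rat. nv (x - of_rat q) < e)"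

definition nv_lim :: "('a::field_char_0 \<Rightarrow> real) \<Rightarrow> (nat \<Rightarrow> 'a) \<Rightarrow> 'a" where
  "nv_lim nv xs = (THE L. nv_tendsto nv xs L)"

definition nv_has_sum :: "('a::field_char_0 \<Rightarrow> real) \<Rightarrow> ('b \<Rightarrow> 'a) \<Rightarrow> 'b set \<Rightarrow> 'a \<Rightarrow> bool" where
  "nv_has_sum nv f S s \<longleftrightarrow> (\<forall>e>0. \<exists>F0. finite F0 \<and> F0 \<subseteq> S \<and>
      (\<forall>F. finite F \<and> F0 \<subseteq> F \<and> F \<subseteq> S \<longrightarrow> nv (sum f F - s) < e))"

definition nv_sum :: "('a::field_char_0 \<Rightarrow> real) \<Rightarrow> ('b \<Rightarrow> 'a) \<Rightarrow> 'b set \<Rightarrow> 'a" where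
  "nv_sum nv f S = (THE s. nv_has_sum nv f S s)"

definition residually_finite :: "('g, 'c) monoid_scheme \<Rightarrow> bool" where
  "residually_finite G \<longleftrightarrow> (\<forall>g\<in>carrier G. g \<noteq> \<one>\<^bsub>G\<^esub> \<longrightarrow>
      (\<exists>N. N \<lhd> G \<and> finite (carrier (G Mod N)) \<and> g \<notin> N))"

definition tends_to_e :: "('g, 'c) monoid_scheme \<Rightarrow> (nat \<Rightarrow> 'g set) \<Rightarrow> bool" where
  "tends_to_e G \<Gamma>s \<longleftrightarrow> (\<forall>n. \<Gamma>s n \<lhd> G \<and> finite (carrier (G Mod \<Gamma>s n)))
      \<and> (\<forall>g\<in>carrier G. infinite {n. g \<in> \<Gamma>s n} \<longrightarrow> g = \<one>\<^bsub>G\<^esub>)"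

definition c0 :: "('g, 'c) monoid_scheme \<Rightarrow> ('a::field_char_0 \<Rightarrow> real) \<Rightarrow> ('g \<Rightarrow> 'a) \<Rightarrow> bool" where
  "c0 G nv x \<longleftrightarrow> (\<forall>g. g \<notin> carrier G \<longrightarrow> x g = 0)
      \<and> (\<forall>e>0. finite {g\<in>carrier G. nv (x g) \<ge> e})"

definition conv :: "('g, 'c) monoid_scheme \<Rightarrow> ('a::field_char_0 \<Rightarrow> real) \<Rightarrow> ('g \<Rightarrow> 'a) \<Rightarrow> ('g \<Rightarrow> 'a) \<Rightarrow> 'g \<Rightarrow> 'a" where
  "conv G nv x y g = (if g \<in> carrier G then
      nv_sum nv (\<lambda>a. x a * y (inv\<^bsub>G\<^esub> a \<otimes>\<^bsub>G\<^esub> g)) (carrier G) else 0)"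

type_synonym ('g, 'a) gmat = "nat \<Rightarrow> nat \<Rightarrow> 'g \<Rightarrow> 'a"

definition mone :: "('g, 'c) monoid_scheme \<Rightarrow> ('g, 'a::field_char_0) gmat" where
  "mone G i j g = (if i = j \<and> g = \<one>\<^bsub>G\<^esub> then 1 else 0)"

definition mminus :: "('g, 'a::field_char_0) gmat \<Rightarrow> ('g, 'a) gmat \<Rightarrow> ('g, 'a) gmat" where
  "mminus A B i j g = A i j g - B i j g"

definition mmul :: "('g, 'c) monoid_scheme \<Rightarrow> ('a::field_char_0 \<Rightarrow> real) \<Rightarrow> nat \<Rightarrow>
    ('g, 'a) gmat \<Rightarrow> ('g, 'a) gmat \<Rightarrow> ('g, 'a) gmat" where
  "mmul G nv r A B i j g = (\<Sum>k<r. conv G nv (A i k) (B k j) g)"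

fun mpow :: "('g, 'c) monoid_scheme \<Rightarrow> ('a::field_char_0 \<Rightarrow> real) \<Rightarrow> nat \<Rightarrow>
    ('g, 'a) gmat \<Rightarrow> nat \<Rightarrow> ('g, 'a) gmat" where
  "mpow G nv r A 0 = mone G"
| "mpow G nv r A (Suc n) = mmul G nv r (mpow G nv r A n) A"

text \<open>log u = - sum_{nu>=1} (1-u)^nu / nu, taken entrywise and coefficientwise
(norm convergence in c_0 implies coefficientwise convergence to the same limit).\<close>
definition mlog :: "('g, 'c) monoid_scheme \<Rightarrow> ('a::field_char_0 \<Rightarrow> real) \<Rightarrow> nat \<Rightarrow>
    ('g, 'a) gmat \<Rightarrow> ('g, 'a) gmat" where
  "mlog G nv r u i j g = nv_lim nv (\<lambda>n. - (\<Sum>\<nu>\<in>{1..n}.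
       mpow G nv r (mminus (mone G) u) \<nu> i j g / of_nat \<nu>))"

definition trG :: "('g, 'c) monoid_scheme \<Rightarrow> nat \<Rightarrow> ('g, 'a::field_char_0) gmat \<Rightarrow> 'a" where
  "trG G r A = (\<Sum>i<r. A i i \<one>\<^bsub>G\<^esub>)"

definition log_det :: "('g, 'c) monoid_scheme \<Rightarrow> ('a::field_char_0 \<Rightarrow> real) \<Rightarrow> nat \<Rightarrow>
    ('g, 'a) gmat \<Rightarrow> 'a" where
  "log_det G nv r u = trG G r (mlog G nv r u)"

definition one_plus_p_int :: "nat \<Rightarrow> ('g, 'c) monoid_scheme \<Rightarrow> ('a::field_char_0 \<Rightarrow> real) \<Rightarrow> nat \<Rightarrow>
    ('g, 'a) gmat \<Rightarrow> bool" where
  "one_plus_p_int p G nv r f \<longleftrightarrow> (\<exists>A. (\<forall>i<r. \<forall>j<r. c0 G nv (A i j) \<and> (\<forall>g. nv (A i j g) \<le> 1)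
      \<and> (\<forall>g. f i j g = mone G i j g + of_nat p * A i j g)))"

text \<open>Reduction c_0(Gamma) \<rightarrow> c_0(Gamma/N), applied entrywise; the coefficient
of a coset C is the sum of the coefficients over C.\<close>
definition mreduce :: "('a::field_char_0 \<Rightarrow> real) \<Rightarrow> ('g, 'a) gmat \<Rightarrow> ('g set, 'a) gmat" where
  "mreduce nv f i j C = nv_sum nv (f i j) C"

end

theory Submission
  imports Defs
begin



lemma null_cmp:
  fixes f g :: "nat \<Rightarrow> real"
  assumes "\<And>n. 0 \<le> f n" "\<And>n. f n \<le> g n" "g \<longlonglongrightarrow> 0"
  shows "f \<longlonglongrightarrow> 0"
  by (rule tendsto_sandwich[where f="\<lambda>n. 0" and h=g]) (use assms in auto)

locale nvf =
  fixes nv :: "'a::field_char_0 \<Rightarrow> real"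
  assumes nn: "\<And>x. nv x \<ge> 0"
    and nz: "\<And>x. nv x = 0 \<longleftrightarrow> x = 0"
    and nmul: "\<And>x y. nv (x * y) = nv x * nv y"
    and nul: "\<And>x y. nv (x + y) \<le> max (nv x) (nv y)"
    and ncp: "\<And>xs. nv_cauchy nv xs \<Longrightarrow> \<exists>L. nv_tendsto nv xs L"
begin

lemma nv0[simp]: "nv 0 = 0" using nz by simp

lemma nv1[simp]: "nv 1 = 1"
proof -
  have "nv 1 = nv 1 * nv 1" using nmul[of 1 1] by simp
  moreover have "nv 1 \<noteq> 0" using nz by simp
  ultimately show ?thesis by (metis mult_cancel_right1)
qed

lemma nvm1: "nv (-1) = 1"
proof -
  have "nv (-1) * nv (-1) = 1" using nmul[of "-1" "-1"] by simp
  moreover have "nv (-1) \<ge> 0" by (rule nn)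
  ultimately show ?thesis
    using power2_eq_1_iff[of "nv (-1)"] by (auto simp: power2_eq_square)
qed

lemma nv_uminus[simp]: "nv (- x) = nv x"
  using nmul[of "-1" x] nvm1 by simp

lemma nv_diff_sym: "nv (x - y) = nv (y - x)"
  by (metis minus_diff_eq nv_uminus)

lemma nv_diff: "nv (x - y) \<le> max (nv x) (nv y)"
  using nul[of x "-y"] by simp

lemma nv_tri: "nv (x - z) \<le> max (nv (x - y)) (nv (y - z))"
  using nul[of "x - y" "y - z"] by simp

lemma nv_add_le: "nv (x + y) \<le> nv x + nv y"
  using nul[of x y] nn[of x] nn[of y] by linarith

lemma nv_div: "nv (x / y) = nv x / nv y"
proof (cases "y = 0")
  case True then show ?thesis by simp
next
  case False
  have "nv x = nv (x / y) * nv y" using nmul[of "x/y" y] False by simp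
  moreover have "nv y \<noteq> 0" using False nz by simp
  ultimately show ?thesis by simp
qed

lemma nv_sum_le:
  assumes "0 \<le> B" "\<And>x. x \<in> F \<Longrightarrow> nv (f x) \<le> B"
  shows "nv (sum f F) \<le> B"
  using assms(2)
proof (induction F rule: infinite_finite_induct)
  case (infinite A) then show ?case using assms(1) by simp
next
  case empty then show ?case using assms(1) by simp
next
  case (insert x F)
  have "nv (sum f (insert x F)) = nv (f x + sum f F)" using insert.hyps by simp
  also have "\<dots> \<le> max (nv (f x)) (nv (sum f F))" by (rule nul)
  also have "\<dots> \<le> B" using insert by auto
  finally show ?case .
qed

lemma nv_sum_less:
  assumes "0 < e" "\<And>x. x \<in> F \<Longrightarrow> nv (f x) < e"
  shows "nv (sum f F) < e"
  using assms(2)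
proof (induction F rule: infinite_finite_induct)
  case (infinite A) then show ?case using assms(1) by simp
next
  case empty then show ?case using assms(1) by simp
next
  case (insert x F)
  have "nv (sum f (insert x F)) = nv (f x + sum f F)" using insert.hyps by simp
  also have "\<dots> \<le> max (nv (f x)) (nv (sum f F))" by (rule nul)
  also have "\<dots> < e" using insert by auto
  finally show ?case .
qed

lemma nv_of_nat_le: "nv (of_nat n) \<le> 1"
proof (induction n)
  case 0 then show ?case by simp
next
  case (Suc n)
  have "nv (of_nat (Suc n)) = nv (1 + of_nat n)" by simp
  also have "\<dots> \<le> max (nv 1) (nv (of_nat n))" by (rule nul)
  finally show ?case using Suc by simp
qed

subsection \<open>Limits\<close>

lemma tendsto_unique:
  assumes "nv_tendsto nv xs L" "nv_tendsto nv xs M"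
  shows "L = M"
proof -
  have a: "(\<lambda>n. nv (xs n - L) + nv (xs n - M)) \<longlonglongrightarrow> 0"
    using assms tendsto_add[of "\<lambda>n. nv (xs n - L)" 0 sequentially "\<lambda>n. nv (xs n - M)" 0]
    unfolding nv_tendsto_def by simp
  have "\<And>n. nv (L - M) \<le> nv (xs n - L) + nv (xs n - M)"
  proof -
    fix n
    have "nv (L - M) \<le> max (nv (L - xs n)) (nv (xs n - M))" by (rule nv_tri)
    then show "nv (L - M) \<le> nv (xs n - L) + nv (xs n - M)"
      using nv_diff_sym[of L "xs n"] nn[of "xs n - L"] nn[of "xs n - M"]
      by (auto simp: max_def split: if_split_asm)
  qed
  then have "nv (L - M) \<le> 0" using LIMSEQ_le_const[OF a] by blast
  then have "nv (L - M) = 0" using nn[of "L - M"] by linarith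
  then show ?thesis using nz by simp
qed

lemma lim_eq: "nv_tendsto nv xs L \<Longrightarrow> nv_lim nv xs = L"
  unfolding nv_lim_def using tendsto_unique by blast

lemma tendsto_add:
  assumes "nv_tendsto nv xs L" "nv_tendsto nv ys M"
  shows "nv_tendsto nv (\<lambda>n. xs n + ys n) (L + M)"
proof -
  have a: "(\<lambda>n. nv (xs n - L) + nv (ys n - M)) \<longlonglongrightarrow> 0"
    using assms Limits.tendsto_add[of "\<lambda>n. nv (xs n - L)" 0 sequentially "\<lambda>n. nv (ys n - M)" 0]
    unfolding nv_tendsto_def by simp
  have "\<And>n. nv (xs n + ys n - (L + M)) \<le> nv (xs n - L) + nv (ys n - M)"
    using nv_add_le by (metis add_diff_add)
  then show ?thesis unfolding nv_tendsto_def
    by (rule null_cmp[OF nn _ a])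
qed

lemma tendsto_const: "nv_tendsto nv (\<lambda>n. c) c"
  unfolding nv_tendsto_def by simp

lemma tendsto_sum:
  assumes "\<And>i. i \<in> I \<Longrightarrow> nv_tendsto nv (xs i) (L i)" "finite I"
  shows "nv_tendsto nv (\<lambda>n. \<Sum>i\<in>I. xs i n) (\<Sum>i\<in>I. L i)"
  using assms(2,1)
proof (induction I rule: finite_induct)
  case empty then show ?case using tendsto_const[of 0] by simp
next
  case (insert x F)
  then show ?case using tendsto_add[of "xs x" "L x" "\<lambda>n. \<Sum>i\<in>F. xs i n" "\<Sum>i\<in>F. L i"] by simp
qed

lemma tendsto_le:
  assumes "nv_tendsto nv xs L" "nv_tendsto nv ys M" "\<And>n. nv (xs n - ys n) \<le> B"
  shows "nv (L - M) \<le> B"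
proof -
  have a: "(\<lambda>n. B + (nv (xs n - L) + nv (ys n - M))) \<longlonglongrightarrow> B + 0"
    using assms Limits.tendsto_add[of "\<lambda>n. nv (xs n - L)" 0 sequentially "\<lambda>n. nv (ys n - M)" 0]
    unfolding nv_tendsto_def by (intro Limits.tendsto_add) auto
  have "\<And>n. nv (L - M) \<le> B + (nv (xs n - L) + nv (ys n - M))"
  proof -
    fix n
    have "nv (L - M) \<le> max (nv (L - xs n)) (nv (xs n - M))" by (rule nv_tri)
    moreover have "nv (xs n - M) \<le> max (nv (xs n - ys n)) (nv (ys n - M))" by (rule nv_tri)
    ultimately show "nv (L - M) \<le> B + (nv (xs n - L) + nv (ys n - M))"
      using nv_diff_sym[of L "xs n"] nn[of "xs n - L"] nn[of "ys n - M"] assms(3)[of n] nn[of "xs n - ys n"]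
      by (auto simp: max_def split: if_split_asm)
  qed
  then show ?thesis using LIMSEQ_le_const[OF a] by auto
qed

lemma series_conv:
  assumes "\<And>e. e > 0 \<Longrightarrow> \<exists>M. \<forall>k\<ge>M. nv (u k) < e"
  shows "\<exists>L. nv_tendsto nv (\<lambda>n. \<Sum>k\<in>{1..n}. u k) L"
proof -
  have "nv_cauchy nv (\<lambda>n. \<Sum>k\<in>{1..n}. u k)"
    unfolding nv_cauchy_def
  proof (intro allI impI)
    fix e :: real assume e: "e > 0"
    obtain M where M: "\<And>k. k \<ge> M \<Longrightarrow> nv (u k) < e" using assms[OF e] by blast
    have *: "nv ((\<Sum>k\<in>{1..m}. u k) - (\<Sum>k\<in>{1..n}. u k)) < e" if "m \<ge> M" "n \<ge> M" "n \<le> m" for m n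
    proof -
      have "(\<Sum>k\<in>{1..m}. u k) - (\<Sum>k\<in>{1..n}. u k) = (\<Sum>k\<in>{1..m} - {1..n}. u k)"
        using that by (subst sum_diff) auto
      also have "nv \<dots> < e" by (rule nv_sum_less[OF e]) (use M that in auto)
      finally show ?thesis .
    qed
    show "\<exists>N. \<forall>m\<ge>N. \<forall>n\<ge>N. nv ((\<Sum>k\<in>{1..m}. u k) - (\<Sum>k\<in>{1..n}. u k)) < e"
    proof (intro exI allI impI)
      fix m n assume "m \<ge> M" "n \<ge> M"
      then show "nv ((\<Sum>k\<in>{1..m}. u k) - (\<Sum>k\<in>{1..n}. u k)) < e"
        using *[of m n] *[of n m] nv_diff_sym by (cases "n \<le> m") auto
    qed
  qed
  then show ?thesis by (rule ncp)
qed

end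



definition c0on :: "('a::field_char_0 \<Rightarrow> real) \<Rightarrow> ('b \<Rightarrow> 'a) \<Rightarrow> 'b set \<Rightarrow> bool" where
  "c0on nv f S \<longleftrightarrow> (\<forall>e>0. finite {x\<in>S. e \<le> nv (f x)})"

context nvf begin

lemma hsD:
  assumes "nv_has_sum nv f S s" "e > 0"
  obtains F0 where "finite F0" "F0 \<subseteq> S" "\<And>F. finite F \<and> F0 \<subseteq> F \<and> F \<subseteq> S \<Longrightarrow> nv (sum f F - s) < e"
proof -
  have "\<exists>F0. finite F0 \<and> F0 \<subseteq> S \<and> (\<forall>F. finite F \<and> F0 \<subseteq> F \<and> F \<subseteq> S \<longrightarrow> nv (sum f F - s) < e)"
    using assms unfolding nv_has_sum_def by simp
  then obtain F0 where "finite F0 \<and> F0 \<subseteq> S \<and> (\<forall>F. finite F \<and> F0 \<subseteq> F \<and> F \<subseteq> S \<longrightarrow> nv (sum f F - s) < e)"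
    by (elim exE)
  then show ?thesis using that by blast
qed

lemma hs_unique:
  assumes "nv_has_sum nv f S s" "nv_has_sum nv f S t"
  shows "s = t"
proof -
  have "nv (s - t) < e" if e: "e > 0" for e
  proof -
    obtain F1 where F1: "finite F1" "F1 \<subseteq> S" "\<And>F. finite F \<and> F1 \<subseteq> F \<and> F \<subseteq> S \<Longrightarrow> nv (sum f F - s) < e"
      by (rule hsD[OF assms(1) e]) blast
    obtain F2 where F2: "finite F2" "F2 \<subseteq> S" "\<And>F. finite F \<and> F2 \<subseteq> F \<and> F \<subseteq> S \<Longrightarrow> nv (sum f F - t) < e"
      by (rule hsD[OF assms(2) e]) blast
    have a: "nv (sum f (F1 \<union> F2) - s) < e" "nv (sum f (F1 \<union> F2) - t) < e"
      using F1 F2 by auto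
    have "nv (s - t) \<le> max (nv (s - sum f (F1 \<union> F2))) (nv (sum f (F1 \<union> F2) - t))" by (rule nv_tri)
    then show ?thesis using a nv_diff_sym[of s] by (auto simp: max_def split: if_split_asm)
  qed
  then have "\<not> nv (s - t) > 0" by force
  then have "nv (s - t) = 0" using nn[of "s - t"] by linarith
  then show ?thesis using nz by simp
qed

lemma nsum_eq: "nv_has_sum nv f S s \<Longrightarrow> nv_sum nv f S = s"
  unfolding nv_sum_def using hs_unique by blast

lemma hs_finite: "finite S \<Longrightarrow> nv_has_sum nv f S (sum f S)"
  unfolding nv_has_sum_def
  by (intro allI impI exI[of _ S]) auto

lemma hs_cong:
  assumes "\<And>x. x \<in> S \<Longrightarrow> f x = g x" "nv_has_sum nv f S s"
  shows "nv_has_sum nv g S s"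
  unfolding nv_has_sum_def
proof (intro allI impI)
  fix e :: real assume "e > 0"
  obtain F0 where F0: "finite F0" "F0 \<subseteq> S" "\<And>F. finite F \<and> F0 \<subseteq> F \<and> F \<subseteq> S \<Longrightarrow> nv (sum f F - s) < e"
    by (rule hsD[OF assms(2) \<open>e > 0\<close>]) blast
  have "sum f F = sum g F" if "F \<subseteq> S" for F
    using that assms(1) by (intro sum.cong) auto
  then show "\<exists>F0. finite F0 \<and> F0 \<subseteq> S \<and> (\<forall>F. finite F \<and> F0 \<subseteq> F \<and> F \<subseteq> S \<longrightarrow> nv (sum g F - s) < e)"
    using F0 by (intro exI[of _ F0]) auto
qed

lemma nsum_cong:
  assumes "\<And>x. x \<in> S \<Longrightarrow> f x = g x"
  shows "nv_sum nv f S = nv_sum nv g S"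
proof -
  have "nv_has_sum nv f S s \<longleftrightarrow> nv_has_sum nv g S s" for s
    using hs_cong[of S f g s] hs_cong[of S g f s] assms by auto
  then have "nv_has_sum nv f S = nv_has_sum nv g S" by (intro ext)
  then show ?thesis unfolding nv_sum_def by simp
qed

lemma hs_exists:
  assumes "c0on nv f S"
  shows "\<exists>s. nv_has_sum nv f S s"
proof -
  define Fk where "Fk k = {x\<in>S. 1 / real (Suc k) \<le> nv (f x)}" for k
  have fin: "finite (Fk k)" for k using assms unfolding c0on_def Fk_def by simp
  have mono: "Fk k \<subseteq> Fk m" if "k \<le> m" for k m
  proof -
    have "1 / real (Suc m) \<le> 1 / real (Suc k)" using that by (simp add: frac_le)
    then show ?thesis unfolding Fk_def by auto
  qed
  have small: "nv (f x) < 1 / real (Suc k)" if "x \<in> S" "x \<notin> Fk k" for x k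
    using that unfolding Fk_def by auto
  define sk where "sk k = sum f (Fk k)" for k
  have diff: "nv (sk m - sk n) < 1 / real (Suc N)" if "N \<le> n" "n \<le> m" for m n N
  proof -
    have "sk m - sk n = sum f (Fk m - Fk n)" unfolding sk_def
      using mono[OF that(2)] fin by (simp add: sum_diff)
    also have "nv \<dots> < 1 / real (Suc N)"
    proof (rule nv_sum_less)
      fix x assume "x \<in> Fk m - Fk n"
      then have "nv (f x) < 1 / real (Suc n)" using small[of x n] unfolding Fk_def by auto
      also have "\<dots> \<le> 1 / real (Suc N)" using that by (simp add: frac_le)
      finally show "nv (f x) < 1 / real (Suc N)" .
    qed simp
    finally show ?thesis .
  qed
  have "nv_cauchy nv sk" unfolding nv_cauchy_def
  proof (intro allI impI)
    fix e :: real assume "e > 0"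
    then obtain N where N: "inverse (real (Suc N)) < e" using reals_Archimedean by blast
    show "\<exists>N. \<forall>m\<ge>N. \<forall>n\<ge>N. nv (sk m - sk n) < e"
    proof (intro exI allI impI)
      fix m n assume "m \<ge> N" "n \<ge> N"
      have "nv (sk m - sk n) < 1 / real (Suc N)"
      proof (cases "n \<le> m")
        case True then show ?thesis using diff[of N n m] \<open>n \<ge> N\<close> by blast
      next
        case False then show ?thesis using diff[of N m n] \<open>m \<ge> N\<close> nv_diff_sym[of "sk m" "sk n"] by simp
      qed
      then show "nv (sk m - sk n) < e" using N by (simp add: inverse_eq_divide)
    qed
  qed
  then obtain L where L: "nv_tendsto nv sk L" using ncp by blast
  have "nv_has_sum nv f S L" unfolding nv_has_sum_def
  proof (intro allI impI)
    fix e :: real assume e: "e > 0"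
    obtain K where K: "\<And>k. k \<ge> K \<Longrightarrow> nv (sk k - L) < e"
    proof -
      have "\<exists>K. \<forall>k\<ge>K. norm (nv (sk k - L) - 0) < e"
        using L e unfolding nv_tendsto_def by (intro LIMSEQ_D) auto
      then show ?thesis using that by (auto simp: abs_of_nonneg nn)
    qed
    obtain N where N: "inverse (real (Suc N)) < e" using e reals_Archimedean by blast
    define k where "k = max K N"
    have k1: "nv (sk k - L) < e" using K k_def by simp
    have k2: "1 / real (Suc k) < e"
    proof -
      have "1 / real (Suc k) \<le> 1 / real (Suc N)" unfolding k_def by (simp add: frac_le)
      then show ?thesis using N by (simp add: inverse_eq_divide)
    qed
    show "\<exists>F0. finite F0 \<and> F0 \<subseteq> S \<and> (\<forall>F. finite F \<and> F0 \<subseteq> F \<and> F \<subseteq> S \<longrightarrow> nv (sum f F - L) < e)"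
    proof (intro exI conjI allI impI)
      show "finite (Fk k)" by (rule fin)
      show "Fk k \<subseteq> S" unfolding Fk_def by auto
      fix F assume F: "finite F \<and> Fk k \<subseteq> F \<and> F \<subseteq> S"
      have "sum f F - L = sum f (F - Fk k) + (sk k - L)"
        unfolding sk_def using F by (simp add: sum_diff)
      also have "nv \<dots> \<le> max (nv (sum f (F - Fk k))) (nv (sk k - L))" by (rule nul)
      also have "\<dots> < e"
      proof -
        have "nv (sum f (F - Fk k)) < e"
        proof (rule nv_sum_less[OF e])
          fix x assume x: "x \<in> F - Fk k"
          then have "nv (f x) < 1 / real (Suc k)" using small[of x k] F by auto
          then show "nv (f x) < e" using k2 by linarith
        qed
        then show ?thesis using k1 by simp
      qed
      finally show "nv (sum f F - L) < e" .
    qed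
  qed
  then show ?thesis by blast
qed

end


context nvf begin
lemma hs_bound:
  assumes "nv_has_sum nv f S s" "0 \<le> B" "\<And>x. x \<in> S \<Longrightarrow> nv (f x) \<le> B"
  shows "nv s \<le> B"
proof -
  have "nv s \<le> B + e" if e: "e > 0" for e
  proof -
    obtain F0 where F0: "finite F0" "F0 \<subseteq> S" "\<And>F. finite F \<and> F0 \<subseteq> F \<and> F \<subseteq> S \<Longrightarrow> nv (sum f F - s) < e"
      by (rule hsD[OF assms(1) e]) blast
    have a: "nv (sum f F0 - s) < e" using F0 by auto
    have b: "nv (sum f F0) \<le> B" using F0 assms by (intro nv_sum_le) auto
    have "nv s \<le> max (nv (sum f F0)) (nv (sum f F0 - s))"
      using nv_diff[of "sum f F0" "sum f F0 - s"] by simp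
    then show ?thesis using a b e assms(2) by (auto simp: max_def split: if_split_asm)
  qed
  then show ?thesis by (rule field_le_epsilon)
qed

lemma hs_add:
  assumes "nv_has_sum nv f S s" "nv_has_sum nv g S t"
  shows "nv_has_sum nv (\<lambda>x. f x + g x) S (s + t)"
  unfolding nv_has_sum_def
proof (intro allI impI)
  fix e :: real assume e: "e > 0"
  obtain F1 where F1: "finite F1" "F1 \<subseteq> S" "\<And>F. finite F \<and> F1 \<subseteq> F \<and> F \<subseteq> S \<Longrightarrow> nv (sum f F - s) < e"
    by (rule hsD[OF assms(1) e]) blast
  obtain F2 where F2: "finite F2" "F2 \<subseteq> S" "\<And>F. finite F \<and> F2 \<subseteq> F \<and> F \<subseteq> S \<Longrightarrow> nv (sum g F - t) < e"
    by (rule hsD[OF assms(2) e]) blast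
  show "\<exists>F0. finite F0 \<and> F0 \<subseteq> S \<and> (\<forall>F. finite F \<and> F0 \<subseteq> F \<and> F \<subseteq> S \<longrightarrow> nv (sum (\<lambda>x. f x + g x) F - (s + t)) < e)"
  proof (intro exI[of _ "F1 \<union> F2"] conjI allI impI)
    fix F assume F: "finite F \<and> F1 \<union> F2 \<subseteq> F \<and> F \<subseteq> S"
    have "sum (\<lambda>x. f x + g x) F - (s + t) = (sum f F - s) + (sum g F - t)"
      by (simp add: sum.distrib)
    also have "nv \<dots> \<le> max (nv (sum f F - s)) (nv (sum g F - t))" by (rule nul)
    also have "\<dots> < e" using F F1 F2 by auto
    finally show "nv (sum (\<lambda>x. f x + g x) F - (s + t)) < e" .
  qed (use F1 F2 in auto)
qed

lemma hs_cmult: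
  assumes "nv_has_sum nv f S s"
  shows "nv_has_sum nv (\<lambda>x. c * f x) S (c * s)"
  unfolding nv_has_sum_def
proof (intro allI impI)
  fix e :: real assume e: "e > 0"
  have e': "e / (nv c + 1) > 0" using e nn[of c] by simp
  obtain F1 where F1: "finite F1" "F1 \<subseteq> S" "\<And>F. finite F \<and> F1 \<subseteq> F \<and> F \<subseteq> S \<Longrightarrow> nv (sum f F - s) < e / (nv c + 1)"
    by (rule hsD[OF assms(1) e']) blast
  show "\<exists>F0. finite F0 \<and> F0 \<subseteq> S \<and> (\<forall>F. finite F \<and> F0 \<subseteq> F \<and> F \<subseteq> S \<longrightarrow> nv (sum (\<lambda>x. c * f x) F - c * s) < e)"
  proof (intro exI[of _ F1] conjI allI impI)
    fix F assume F: "finite F \<and> F1 \<subseteq> F \<and> F \<subseteq> S"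
    have "sum (\<lambda>x. c * f x) F - c * s = c * (sum f F - s)"
      by (simp add: sum_distrib_left right_diff_distrib)
    then have "nv (sum (\<lambda>x. c * f x) F - c * s) = nv c * nv (sum f F - s)" by (simp add: nmul)
    also have "\<dots> \<le> nv c * (e / (nv c + 1))"
      using F1(3)[of F] F nn[of c] by (intro mult_left_mono) auto
    also have "\<dots> < e"
    proof -
      have "nv c * (e / (nv c + 1)) = e * (nv c / (nv c + 1))" by simp
      also have "\<dots> < e * 1" using e nn[of c] by (intro mult_strict_left_mono) auto
      finally show ?thesis by simp
    qed
    finally show "nv (sum (\<lambda>x. c * f x) F - c * s) < e" .
  qed (use F1 in auto)
qed

lemma hs_uminus:
  assumes "nv_has_sum nv f S s"
  shows "nv_has_sum nv (\<lambda>x. - f x) S (- s)"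
  using hs_cmult[OF assms, of "-1"] by simp

lemma hs_diff:
  assumes "nv_has_sum nv f S s" "nv_has_sum nv g S t"
  shows "nv_has_sum nv (\<lambda>x. f x - g x) S (s - t)"
  using hs_add[OF assms(1) hs_uminus[OF assms(2)]] by simp

lemma hs_sum:
  assumes "finite K" "\<And>k. k \<in> K \<Longrightarrow> nv_has_sum nv (f k) S (s k)"
  shows "nv_has_sum nv (\<lambda>x. \<Sum>k\<in>K. f k x) S (\<Sum>k\<in>K. s k)"
  using assms
proof (induction K rule: finite_induct)
  case empty
  have "nv_has_sum nv (\<lambda>x. 0) S 0" unfolding nv_has_sum_def
    by (intro allI impI exI[of _ "{}"]) auto
  then show ?case by simp
next
  case (insert k K)
  then show ?case using hs_add[of "f k" S "s k" "\<lambda>x. \<Sum>k\<in>K. f k x" "\<Sum>k\<in>K. s k"] by simp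
qed

lemma hs_reindex:
  assumes "inj_on h A" "nv_has_sum nv (\<lambda>x. f (h x)) A s"
  shows "nv_has_sum nv f (h ` A) s"
  unfolding nv_has_sum_def
proof (intro allI impI)
  fix e :: real assume e: "e > 0"
  obtain F1 where F1: "finite F1" "F1 \<subseteq> A" "\<And>F. finite F \<and> F1 \<subseteq> F \<and> F \<subseteq> A \<Longrightarrow> nv (sum (\<lambda>x. f (h x)) F - s) < e"
    by (rule hsD[OF assms(2) e]) blast
  show "\<exists>F0. finite F0 \<and> F0 \<subseteq> h ` A \<and> (\<forall>F. finite F \<and> F0 \<subseteq> F \<and> F \<subseteq> h ` A \<longrightarrow> nv (sum f F - s) < e)"
  proof (intro exI[of _ "h ` F1"] conjI allI impI)
    fix F assume F: "finite F \<and> h ` F1 \<subseteq> F \<and> F \<subseteq> h ` A"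
    define F' where "F' = {x\<in>A. h x \<in> F}"
    have hF: "h ` F' = F" using F unfolding F'_def by auto
    have inj': "inj_on h F'" using assms(1) unfolding F'_def by (auto intro: inj_on_subset)
    have fin: "finite F'" using F hF inj' finite_imageD by blast
    have sub: "F1 \<subseteq> F'" using F F1 unfolding F'_def by auto
    have "sum f F = sum (\<lambda>x. f (h x)) F'" using hF inj' sum.reindex[OF inj', of f] by simp
    then show "nv (sum f F - s) < e" using F1(3)[of F'] fin sub unfolding F'_def by auto
  qed (use F1 in auto)
qed

lemma hs_partition:
  assumes "nv_has_sum nv f S s" "\<And>i. i \<in> I \<Longrightarrow> nv_has_sum nv f (P i) (\<sigma> i)"
    "\<And>i. i \<in> I \<Longrightarrow> P i \<subseteq> S"
    "\<And>i j. i \<in> I \<Longrightarrow> j \<in> I \<Longrightarrow> i \<noteq> j \<Longrightarrow> P i \<inter> P j = {}"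
    "S \<subseteq> \<Union>(P ` I)"
  shows "nv_has_sum nv \<sigma> I s"
  unfolding nv_has_sum_def
proof (intro allI impI)
  fix e :: real assume e: "e > 0"
  obtain F0 where F0: "finite F0" "F0 \<subseteq> S" "\<And>F. finite F \<and> F0 \<subseteq> F \<and> F \<subseteq> S \<Longrightarrow> nv (sum f F - s) < e"
    by (rule hsD[OF assms(1) e]) blast
  define idx where "idx x = (SOME i. i \<in> I \<and> x \<in> P i)" for x
  have idx: "idx x \<in> I \<and> x \<in> P (idx x)" if "x \<in> S" for x
    unfolding idx_def using assms(5) that by (metis (mono_tags, lifting) UN_E someI_ex subsetD)
  define J0 where "J0 = {i\<in>I. P i \<inter> F0 \<noteq> {}}"
  have J0sub: "J0 \<subseteq> idx ` F0"
  proof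
    fix i assume "i \<in> J0"
    then obtain x where x: "i \<in> I" "x \<in> P i" "x \<in> F0" unfolding J0_def by auto
    then have "idx x = i" using idx[of x] F0(2) assms(4)[of i "idx x"] by blast
    then show "i \<in> idx ` F0" using x by auto
  qed
  have J0fin: "finite J0" using J0sub F0(1) finite_subset by blast
  show "\<exists>F0. finite F0 \<and> F0 \<subseteq> I \<and> (\<forall>F. finite F \<and> F0 \<subseteq> F \<and> F \<subseteq> I \<longrightarrow> nv (sum \<sigma> F - s) < e)"
  proof (intro exI[of _ J0] conjI allI impI)
    show "finite J0" by (rule J0fin)
    show "J0 \<subseteq> I" unfolding J0_def by auto
    fix J assume J: "finite J \<and> J0 \<subseteq> J \<and> J \<subseteq> I"
    have "\<forall>i\<in>J. \<exists>Fi. finite Fi \<and> F0 \<inter> P i \<subseteq> Fi \<and> Fi \<subseteq> P i \<and> nv (sum f Fi - \<sigma> i) < e"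
    proof
      fix i assume i: "i \<in> J"
      then have "i \<in> I" using J by auto
      obtain F1 where F1: "finite F1" "F1 \<subseteq> P i" "\<And>F. finite F \<and> F1 \<subseteq> F \<and> F \<subseteq> P i \<Longrightarrow> nv (sum f F - \<sigma> i) < e"
        by (rule hsD[OF assms(2)[OF \<open>i \<in> I\<close>] e]) blast
      show "\<exists>Fi. finite Fi \<and> F0 \<inter> P i \<subseteq> Fi \<and> Fi \<subseteq> P i \<and> nv (sum f Fi - \<sigma> i) < e"
        by (rule exI[of _ "F1 \<union> (F0 \<inter> P i)"]) (use F1 F0 in auto)
    qed
    then have "\<exists>FF. \<forall>i\<in>J. finite (FF i) \<and> F0 \<inter> P i \<subseteq> FF i \<and> FF i \<subseteq> P i \<and> nv (sum f (FF i) - \<sigma> i) < e"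
      by (rule bchoice)
    then obtain FF where FF': "\<forall>i\<in>J. finite (FF i) \<and> F0 \<inter> P i \<subseteq> FF i \<and> FF i \<subseteq> P i \<and> nv (sum f (FF i) - \<sigma> i) < e"
      by blast
    then have FF: "\<And>i. i \<in> J \<Longrightarrow> finite (FF i) \<and> F0 \<inter> P i \<subseteq> FF i \<and> FF i \<subseteq> P i \<and> nv (sum f (FF i) - \<sigma> i) < e"
      by blast
    define F where "F = \<Union>(FF ` J)"
    have Ffin: "finite F" unfolding F_def using J FF by auto
    have FS: "F \<subseteq> S" unfolding F_def using FF J assms(3) by blast
    have F0F: "F0 \<subseteq> F"
    proof
      fix x assume x: "x \<in> F0"
      then have "idx x \<in> J0" using idx[of x] F0(2) unfolding J0_def by auto
      then have "idx x \<in> J" using J by auto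
      then show "x \<in> F" unfolding F_def using FF[of "idx x"] idx[of x] x F0(2) by blast
    qed
    have sumF: "sum f F = (\<Sum>i\<in>J. sum f (FF i))" unfolding F_def
    proof (rule sum.UNION_disjoint)
      show "finite J" using J by auto
      show "\<forall>i\<in>J. finite (FF i)" using FF by auto
      show "\<forall>i\<in>J. \<forall>j\<in>J. i \<noteq> j \<longrightarrow> FF i \<inter> FF j = {}"
        using FF J assms(4) by blast
    qed
    have "sum \<sigma> J - s = (\<Sum>i\<in>J. \<sigma> i - sum f (FF i)) + (sum f F - s)"
      using sumF by (simp add: sum_subtractf)
    also have "nv \<dots> \<le> max (nv (\<Sum>i\<in>J. \<sigma> i - sum f (FF i))) (nv (sum f F - s))" by (rule nul)
    also have "\<dots> < e"
    proof -
      have "nv (\<Sum>i\<in>J. \<sigma> i - sum f (FF i)) < e"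
        using FF nv_diff_sym by (intro nv_sum_less[OF e]) auto
      moreover have "nv (sum f F - s) < e" using F0(3) Ffin FS F0F by auto
      ultimately show ?thesis by simp
    qed
    finally show "nv (sum \<sigma> J - s) < e" .
  qed
qed

lemma c0on_subset:
  assumes "c0on nv f S" "T \<subseteq> S"
  shows "c0on nv f T"
  unfolding c0on_def
proof (intro allI impI)
  fix e :: real assume "e > 0"
  have "{x\<in>T. e \<le> nv (f x)} \<subseteq> {x\<in>S. e \<le> nv (f x)}" using assms(2) by auto
  moreover have "finite {x\<in>S. e \<le> nv (f x)}" using assms(1) \<open>e > 0\<close> unfolding c0on_def by auto
  ultimately show "finite {x\<in>T. e \<le> nv (f x)}" by (rule finite_subset)
qed

lemma c0on_finite: "finite S \<Longrightarrow> c0on nv f S"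
  unfolding c0on_def by auto

lemma c0on_cong: "c0on nv f S \<Longrightarrow> (\<And>x. x \<in> S \<Longrightarrow> f x = g x) \<Longrightarrow> c0on nv g S"
  unfolding c0on_def
  by (metis (no_types, lifting) Collect_cong)

lemma c0on_bounded:
  assumes "c0on nv f S"
  shows "\<exists>B>0. \<forall>x\<in>S. nv (f x) \<le> B"
proof -
  define A where "A = {x\<in>S. 1 \<le> nv (f x)}"
  have "finite A" using assms unfolding c0on_def A_def by auto
  define B where "B = 1 + (\<Sum>x\<in>A. nv (f x))"
  have "nv (f x) \<le> B" if "x \<in> S" for x
  proof (cases "x \<in> A")
    case True
    then have "nv (f x) \<le> (\<Sum>x\<in>A. nv (f x))"
      using \<open>finite A\<close> nn by (intro member_le_sum) auto
    then show ?thesis unfolding B_def by simp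
  next
    case False
    then have "nv (f x) < 1" using that unfolding A_def by auto
    moreover have "0 \<le> (\<Sum>x\<in>A. nv (f x))" using nn by (simp add: sum_nonneg)
    ultimately show ?thesis unfolding B_def by simp
  qed
  moreover have "B > 0" unfolding B_def using nn by (simp add: sum_nonneg add_pos_nonneg)
  ultimately show ?thesis by blast
qed

lemma c0on_add:
  assumes "c0on nv f S" "c0on nv g S"
  shows "c0on nv (\<lambda>x. f x + g x) S"
  unfolding c0on_def
proof (intro allI impI)
  fix e :: real assume "e > 0"
  have "{x\<in>S. e \<le> nv (f x + g x)} \<subseteq> {x\<in>S. e \<le> nv (f x)} \<union> {x\<in>S. e \<le> nv (g x)}"
  proof (rule subsetI)
    fix x assume "x \<in> {x\<in>S. e \<le> nv (f x + g x)}"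
    then have "x \<in> S" "e \<le> max (nv (f x)) (nv (g x))" using nul[of "f x" "g x"] by auto
    then show "x \<in> {x\<in>S. e \<le> nv (f x)} \<union> {x\<in>S. e \<le> nv (g x)}"
      by (auto simp: max_def split: if_split_asm)
  qed
  moreover have "finite ({x\<in>S. e \<le> nv (f x)} \<union> {x\<in>S. e \<le> nv (g x)})"
    using assms \<open>e > 0\<close> unfolding c0on_def by auto
  ultimately show "finite {x\<in>S. e \<le> nv (f x + g x)}" using finite_subset by blast
qed

lemma c0on_cmult:
  assumes "c0on nv f S"
  shows "c0on nv (\<lambda>x. c * f x) S"
  unfolding c0on_def
proof (intro allI impI)
  fix e :: real assume e: "e > 0"
  have "{x\<in>S. e \<le> nv (c * f x)} \<subseteq> {x\<in>S. e / (nv c + 1) \<le> nv (f x)}"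
  proof safe
    fix x assume "x \<in> S" "e \<le> nv (c * f x)"
    then have "e \<le> nv c * nv (f x)" by (simp add: nmul)
    also have "\<dots> \<le> (nv c + 1) * nv (f x)" using nn[of "f x"] by (simp add: mult_right_mono)
    finally show "e / (nv c + 1) \<le> nv (f x)" using nn[of c] by (simp add: divide_le_eq mult.commute)
  qed
  moreover have "finite {x\<in>S. e / (nv c + 1) \<le> nv (f x)}"
    using assms e nn[of c] unfolding c0on_def by auto
  ultimately show "finite {x\<in>S. e \<le> nv (c * f x)}" using finite_subset by blast
qed

lemma c0on_diff:
  assumes "c0on nv f S" "c0on nv g S"
  shows "c0on nv (\<lambda>x. f x - g x) S"
  using c0on_add[OF assms(1) c0on_cmult[OF assms(2), of "-1"]] by simp

lemma c0on_sum:
  assumes "\<And>k. k \<in> K \<Longrightarrow> c0on nv (f k) S"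
  shows "c0on nv (\<lambda>x. \<Sum>k\<in>K. f k x) S"
  using assms
proof (induction K rule: infinite_finite_induct)
  case (infinite A) then show ?case unfolding c0on_def by simp
next
  case empty then show ?case unfolding c0on_def by simp
next
  case (insert k K)
  then show ?case using c0on_add[of "f k" S "\<lambda>x. \<Sum>k\<in>K. f k x"] by simp
qed

end



context nvf begin

lemma prod_fin:
  assumes "c0on nv x S" "c0on nv y T" "e > 0"
  shows "finite {(a, b). a \<in> S \<and> b \<in> T \<and> e \<le> nv (x a) * nv (y b)}"
proof -
  obtain Bx where Bx: "Bx > 0" "\<And>a. a \<in> S \<Longrightarrow> nv (x a) \<le> Bx" using c0on_bounded[OF assms(1)] by blast
  obtain By where By: "By > 0" "\<And>b. b \<in> T \<Longrightarrow> nv (y b) \<le> By" using c0on_bounded[OF assms(2)] by blast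
  have sub: "{(a, b). a \<in> S \<and> b \<in> T \<and> e \<le> nv (x a) * nv (y b)}
      \<subseteq> {a\<in>S. e / By \<le> nv (x a)} \<times> {b\<in>T. e / Bx \<le> nv (y b)}"
  proof safe
    fix a b assume ab: "a \<in> S" "b \<in> T" "e \<le> nv (x a) * nv (y b)"
    have "nv (x a) * nv (y b) \<le> nv (x a) * By" using By ab nn by (intro mult_left_mono) auto
    then show "e / By \<le> nv (x a)" using ab By by (simp add: divide_le_eq)
    have "nv (x a) * nv (y b) \<le> Bx * nv (y b)" using Bx ab nn by (intro mult_right_mono) auto
    then show "e / Bx \<le> nv (y b)" using ab Bx by (simp add: divide_le_eq mult.commute)
  qed
  have "finite ({a\<in>S. e / By \<le> nv (x a)} \<times> {b\<in>T. e / Bx \<le> nv (y b)})"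
    using assms Bx By unfolding c0on_def by simp
  then show ?thesis using sub finite_subset by blast
qed

lemma conv_fam_c0:
  fixes G :: "('g, 'c) monoid_scheme" (structure)
  assumes "group G" "c0on nv x (carrier G)" "c0on nv y (carrier G)" "C \<subseteq> carrier G"
  shows "c0on nv (\<lambda>(a, g). x a * y (inv\<^bsub>G\<^esub> a \<otimes>\<^bsub>G\<^esub> g)) (carrier G \<times> C)"
  unfolding c0on_def
proof (intro allI impI)
  interpret group G by fact
  fix e :: real assume e: "e > 0"
  let ?P = "{(a, b). a \<in> carrier G \<and> b \<in> carrier G \<and> e \<le> nv (x a) * nv (y b)}"
  have "{z \<in> carrier G \<times> C. e \<le> nv ((\<lambda>(a, g). x a * y (inv a \<otimes> g)) z)} \<subseteq> (\<lambda>(a, b). (a, a \<otimes> b)) ` ?P"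
  proof (rule subsetI)
    fix z assume z: "z \<in> {z \<in> carrier G \<times> C. e \<le> nv ((\<lambda>(a, g). x a * y (inv a \<otimes> g)) z)}"
    obtain a g where zag: "z = (a, g)" by (cases z)
    have ag: "a \<in> carrier G" "g \<in> C" "e \<le> nv (x a * y (inv a \<otimes> g))" using z zag by auto
    then have "(a, inv a \<otimes> g) \<in> ?P" "z = (\<lambda>(a, b). (a, a \<otimes> b)) (a, inv a \<otimes> g)"
      using assms(4) zag by (auto simp: nmul m_assoc[symmetric])
    then show "z \<in> (\<lambda>(a, b). (a, a \<otimes> b)) ` ?P" by blast
  qed
  moreover have "finite ?P" using prod_fin[OF assms(2,3) e] by simp
  ultimately show "finite {z \<in> carrier G \<times> C. e \<le> nv ((\<lambda>(a, g). x a * y (inv a \<otimes> g)) z)}"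
    using finite_subset by blast
qed

lemma conv_fam1_c0:
  fixes G :: "('g, 'c) monoid_scheme" (structure)
  assumes "group G" "c0on nv x (carrier G)" "c0on nv y (carrier G)" "g \<in> carrier G"
  shows "c0on nv (\<lambda>a. x a * y (inv\<^bsub>G\<^esub> a \<otimes>\<^bsub>G\<^esub> g)) (carrier G)"
  unfolding c0on_def
proof (intro allI impI)
  interpret group G by fact
  fix e :: real assume e: "e > 0"
  let ?P = "{(a, b). a \<in> carrier G \<and> b \<in> carrier G \<and> e \<le> nv (x a) * nv (y b)}"
  have "{a \<in> carrier G. e \<le> nv (x a * y (inv a \<otimes> g))} \<subseteq> fst ` ?P"
  proof safe
    fix a assume "a \<in> carrier G" "e \<le> nv (x a * y (inv a \<otimes> g))"
    then have "(a, inv a \<otimes> g) \<in> ?P" using assms(4) by (auto simp: nmul)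
    then show "a \<in> fst ` ?P" by force
  qed
  moreover have "finite ?P" using prod_fin[OF assms(2,3) e] by simp
  ultimately show "finite {a \<in> carrier G. e \<le> nv (x a * y (inv a \<otimes> g))}"
    using finite_subset by blast
qed

lemma conv_hs:
  fixes G :: "('g, 'c) monoid_scheme" (structure)
  assumes "group G" "c0on nv x (carrier G)" "c0on nv y (carrier G)" "g \<in> carrier G"
  shows "nv_has_sum nv (\<lambda>a. x a * y (inv\<^bsub>G\<^esub> a \<otimes>\<^bsub>G\<^esub> g)) (carrier G) (conv G nv x y g)"
proof -
  obtain s where s: "nv_has_sum nv (\<lambda>a. x a * y (inv\<^bsub>G\<^esub> a \<otimes>\<^bsub>G\<^esub> g)) (carrier G) s"
    using hs_exists[OF conv_fam1_c0[OF assms]] by blast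
  then have "conv G nv x y g = s" unfolding conv_def using assms(4) nsum_eq by simp
  then show ?thesis using s by simp
qed

lemma conv_bound:
  fixes G :: "('g, 'c) monoid_scheme" (structure)
  assumes "group G" "c0on nv x (carrier G)" "c0on nv y (carrier G)" "g \<in> carrier G"
    "0 \<le> Bx" "0 \<le> By" "\<And>a. a \<in> carrier G \<Longrightarrow> nv (x a) \<le> Bx" "\<And>a. a \<in> carrier G \<Longrightarrow> nv (y a) \<le> By"
  shows "nv (conv G nv x y g) \<le> Bx * By"
proof (rule hs_bound[OF conv_hs[OF assms(1-4)]])
  interpret group G by fact
  show "0 \<le> Bx * By" using assms by simp
  fix a assume "a \<in> carrier G"
  then show "nv (x a * y (inv a \<otimes> g)) \<le> Bx * By"
    using assms nn by (auto simp: nmul intro: mult_mono)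
qed

lemma conv_c0:
  fixes G :: "('g, 'c) monoid_scheme" (structure)
  assumes "group G" "c0on nv x (carrier G)" "c0on nv y (carrier G)"
  shows "c0on nv (conv G nv x y) (carrier G)"
  unfolding c0on_def
proof (intro allI impI)
  interpret group G by fact
  fix e :: real assume e: "e > 0"
  have e2: "e / 2 > 0" using e by simp
  let ?P = "{(a, b). a \<in> carrier G \<and> b \<in> carrier G \<and> e / 2 \<le> nv (x a) * nv (y b)}"
  have "{g \<in> carrier G. e \<le> nv (conv G nv x y g)} \<subseteq> (\<lambda>(a, b). a \<otimes> b) ` ?P"
  proof safe
    fix g assume g: "g \<in> carrier G" "e \<le> nv (conv G nv x y g)"
    have "\<exists>a\<in>carrier G. e / 2 \<le> nv (x a * y (inv a \<otimes> g))"
    proof (rule ccontr)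
      assume "\<not> ?thesis"
      then have "nv (conv G nv x y g) \<le> e / 2"
        by (intro hs_bound[OF conv_hs[OF assms g(1)]]) (use e in auto)
      then show False using g e by simp
    qed
    then obtain a where a: "a \<in> carrier G" "e / 2 \<le> nv (x a * y (inv a \<otimes> g))" by blast
    then have "(a, inv a \<otimes> g) \<in> ?P" "g = (\<lambda>(a, b). a \<otimes> b) (a, inv a \<otimes> g)"
      using g by (auto simp: nmul m_assoc[symmetric])
    then show "g \<in> (\<lambda>(a, b). a \<otimes> b) ` ?P" by blast
  qed
  moreover have "finite ?P" using prod_fin[OF assms(2,3) e2] by simp
  ultimately show "finite {g \<in> carrier G. e \<le> nv (conv G nv x y g)}"
    using finite_subset by blast
qed

lemma conv_cong:
  fixes G :: "('g, 'c) monoid_scheme" (structure)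
  assumes "group G" "\<And>a. a \<in> carrier G \<Longrightarrow> x a = x' a" "\<And>a. a \<in> carrier G \<Longrightarrow> y a = y' a"
  shows "conv G nv x y g = conv G nv x' y' g"
proof -
  interpret group G by fact
  show ?thesis unfolding conv_def
    by (auto intro!: nsum_cong simp: assms)
qed

end



context nvf begin

lemma mpow_Suc_fun:
  "mpow G nv r D (Suc n) i j = (\<lambda>g. \<Sum>k<r. conv G nv (mpow G nv r D n i k) (D k j) g)"
  by (rule ext) (simp add: mmul_def)

lemma mone_c0:
  fixes G :: "('g, 'c) monoid_scheme" (structure)
  shows "c0on nv (mone G i j) (carrier G)"
  unfolding c0on_def
proof (intro allI impI)
  fix e :: real assume e: "e > 0"
  have "{g \<in> carrier G. e \<le> nv (mone G i j g)} \<subseteq> {\<one>}"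
    using e by (auto simp: mone_def split: if_split_asm)
  then show "finite {g \<in> carrier G. e \<le> nv (mone G i j g)}" using finite_subset by blast
qed

lemma mpow_c0:
  fixes G :: "('g, 'c) monoid_scheme" (structure)
  assumes "group G" "\<And>i j. i < r \<Longrightarrow> j < r \<Longrightarrow> c0on nv (D i j) (carrier G)"
  shows "i < r \<Longrightarrow> j < r \<Longrightarrow> c0on nv (mpow G nv r D n i j) (carrier G)"
proof (induction n arbitrary: i j)
  case 0 then show ?case using mone_c0 by simp
next
  case (Suc n)
  show ?case unfolding mpow_Suc_fun
    by (rule c0on_sum, rule conv_c0[OF assms(1)]) (use Suc assms(2) in auto)
qed

lemma mpow_bound:
  fixes G :: "('g, 'c) monoid_scheme" (structure)
  assumes "group G" "\<And>i j. i < r \<Longrightarrow> j < r \<Longrightarrow> c0on nv (D i j) (carrier G)" "0 \<le> q"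
    "\<And>i j g. i < r \<Longrightarrow> j < r \<Longrightarrow> g \<in> carrier G \<Longrightarrow> nv (D i j g) \<le> q"
  shows "i < r \<Longrightarrow> j < r \<Longrightarrow> g \<in> carrier G \<Longrightarrow> nv (mpow G nv r D n i j g) \<le> q ^ n"
proof (induction n arbitrary: i j g)
  case 0 then show ?case by (simp add: mone_def)
next
  case (Suc n)
  have "nv (\<Sum>k<r. conv G nv (mpow G nv r D n i k) (D k j) g) \<le> q ^ n * q"
  proof (rule nv_sum_le)
    show "0 \<le> q ^ n * q" using assms(3) by simp
    fix k assume "k \<in> {..<r}"
    then show "nv (conv G nv (mpow G nv r D n i k) (D k j) g) \<le> q ^ n * q"
      using Suc assms by (intro conv_bound[OF assms(1) mpow_c0[OF assms(1,2)]]) auto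
  qed
  then show ?case unfolding mpow_Suc_fun by (simp add: mult.commute)
qed

lemma hs_support:
  assumes "\<And>x. x \<in> S \<Longrightarrow> x \<notin> T \<Longrightarrow> f x = 0" "finite T" "T \<subseteq> S"
  shows "nv_has_sum nv f S (sum f T)"
  unfolding nv_has_sum_def
proof (intro allI impI exI[of _ T] conjI)
  fix e :: real and F assume e: "e > 0" and F: "finite F \<and> T \<subseteq> F \<and> F \<subseteq> S"
  have "sum f F = sum f T" using F assms by (intro sum.mono_neutral_right) auto
  then show "nv (sum f F - sum f T) < e" using e by simp
qed (use assms in auto)

lemma coset_facts:
  fixes G :: "('g, 'c) monoid_scheme" (structure)
  assumes "group G" "N \<lhd> G" "A \<in> carrier (G Mod N)"
  shows "A \<subseteq> carrier G" "\<exists>a\<in>carrier G. A = N #> a" "\<And>a. a \<in> A \<Longrightarrow> A = N #> a"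
proof -
  interpret group G by fact
  interpret normal N G by fact
  have Ar: "A \<in> rcosets N" using assms(3) by (simp add: FactGroup_def)
  show "A \<subseteq> carrier G" using rcosets_carrier[OF assms(1) Ar] .
  show ex: "\<exists>a\<in>carrier G. A = N #> a" using Ar unfolding RCOSETS_def by auto
  fix a assume a: "a \<in> A"
  obtain a0 where a0: "a0 \<in> carrier G" "A = N #> a0" using ex by blast
  show "A = N #> a" using repr_independence[of a N a0] a a0 subgroup_axioms by simp
qed

lemma coset_shift:
  fixes G :: "('g, 'c) monoid_scheme" (structure)
  assumes "group G" "N \<lhd> G" "A \<in> carrier (G Mod N)" "C \<in> carrier (G Mod N)" "a \<in> A"
  shows "(\<lambda>b. a \<otimes> b) ` (inv\<^bsub>G Mod N\<^esub> A \<otimes>\<^bsub>G Mod N\<^esub> C) = C"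
proof -
  interpret group G by fact
  interpret normal N G by fact
  have aG: "a \<in> carrier G" using coset_facts(1)[OF assms(1-3)] assms(5) by auto
  have A: "A = N #> a" using coset_facts(3)[OF assms(1-3,5)] .
  obtain c where c: "c \<in> carrier G" "C = N #> c" using coset_facts(2)[OF assms(1,2,4)] by blast
  have "inv\<^bsub>G Mod N\<^esub> A = N #> inv a"
    using inv_FactGroup[OF assms(3)] A rcos_inv[OF aG] by simp
  then have eq: "inv\<^bsub>G Mod N\<^esub> A \<otimes>\<^bsub>G Mod N\<^esub> C = N #> (inv a \<otimes> c)"
    using c aG by (simp add: rcos_sum)
  have "(\<lambda>b. a \<otimes> b) ` (N #> (inv a \<otimes> c)) = N #> c"
  proof
    show "(\<lambda>b. a \<otimes> b) ` (N #> (inv a \<otimes> c)) \<subseteq> N #> c"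
    proof
      fix z assume "z \<in> (\<lambda>b. a \<otimes> b) ` (N #> (inv a \<otimes> c))"
      then obtain h where h: "h \<in> N" "z = a \<otimes> (h \<otimes> (inv a \<otimes> c))" unfolding r_coset_def by auto
      have "z = (a \<otimes> h \<otimes> inv a) \<otimes> c" using h aG c by (simp add: m_assoc)
      moreover have "a \<otimes> h \<otimes> inv a \<in> N" using inv_op_closed2[OF aG h(1)] .
      ultimately show "z \<in> N #> c" unfolding r_coset_def by auto
    qed
    show "N #> c \<subseteq> (\<lambda>b. a \<otimes> b) ` (N #> (inv a \<otimes> c))"
    proof
      fix z assume "z \<in> N #> c"
      then obtain h where h: "h \<in> N" "z = h \<otimes> c" unfolding r_coset_def by auto
      have hi: "inv a \<otimes> h \<otimes> a \<in> N" using inv_op_closed1[OF aG h(1)] .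
      have "z = a \<otimes> ((inv a \<otimes> h \<otimes> a) \<otimes> (inv a \<otimes> c))"
        using h aG c by (simp add: m_assoc[symmetric]) (simp add: m_assoc)
      moreover have "(inv a \<otimes> h \<otimes> a) \<otimes> (inv a \<otimes> c) \<in> N #> (inv a \<otimes> c)"
        using hi unfolding r_coset_def by auto
      ultimately show "z \<in> (\<lambda>b. a \<otimes> b) ` (N #> (inv a \<otimes> c))" by blast
    qed
  qed
  then show ?thesis using eq c by simp
qed

end



context nvf begin

lemma hs_nsum: "c0on nv f S \<Longrightarrow> nv_has_sum nv f S (nv_sum nv f S)"
proof -
  assume "c0on nv f S"
  then obtain s where s: "nv_has_sum nv f S s" using hs_exists by blast
  then have "nv_sum nv f S = s" by (rule nsum_eq)
  then show ?thesis using s by simp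
qed

lemma R_mone:
  fixes G :: "('g, 'c) monoid_scheme" (structure)
  assumes "group G" "N \<lhd> G" "C \<in> carrier (G Mod N)"
  shows "nv_has_sum nv (mone G i j) C (mone (G Mod N) i j C)"
proof -
  interpret group G by fact
  interpret normal N G by fact
  have Csub: "C \<subseteq> carrier G" using coset_facts(1)[OF assms] .
  have iff: "\<one> \<in> C \<longleftrightarrow> C = N"
  proof
    assume "\<one> \<in> C"
    then have "C = N #> \<one>" using coset_facts(3)[OF assms] by blast
    then show "C = N" by (simp add: coset_mult_one subset)
  next
    assume "C = N" then show "\<one> \<in> C" by simp
  qed
  have "nv_has_sum nv (mone G i j) C (sum (mone G i j) (C \<inter> {\<one>}))"
    by (rule hs_support) (auto simp: mone_def)
  moreover have "sum (mone G i j) (C \<inter> {\<one>}) = mone (G Mod N) i j C"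
  proof (cases "\<one> \<in> C")
    case True
    then have "C \<inter> {\<one>} = {\<one>}" by auto
    then show ?thesis using True iff by (simp add: mone_def)
  next
    case False
    then have "C \<inter> {\<one>} = {}" by auto
    then show ?thesis using False iff by (simp add: mone_def)
  qed
  ultimately show ?thesis by metis
qed

lemma R_hom:
  fixes G :: "('g, 'c) monoid_scheme" (structure)
  assumes "group G" "N \<lhd> G" "c0on nv x (carrier G)" "c0on nv y (carrier G)" "C \<in> carrier (G Mod N)"
  shows "conv (G Mod N) nv (\<lambda>A. nv_sum nv x A) (\<lambda>A. nv_sum nv y A) C = nv_sum nv (conv G nv x y) C"
proof -
  interpret group G by fact
  interpret normal N G by fact
  have grpH: "group (G Mod N)" by (rule factorgroup_is_group)
  have Csub: "C \<subseteq> carrier G" using coset_facts(1)[OF assms(1,2,5)] .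
  define Fm where "Fm = (\<lambda>(a, g). x a * y (inv a \<otimes> g))"
  have c0F: "c0on nv Fm (carrier G \<times> C)"
    unfolding Fm_def by (rule conv_fam_c0[OF assms(1,3,4) Csub])
  obtain \<Sigma> where \<Sigma>: "nv_has_sum nv Fm (carrier G \<times> C) \<Sigma>" using hs_exists[OF c0F] by blast
  have "nv_has_sum nv (conv G nv x y) C \<Sigma>"
  proof (rule hs_partition[OF \<Sigma>, where P = "\<lambda>g. (\<lambda>a. (a, g)) ` carrier G"])
    fix g assume g: "g \<in> C"
    have "nv_has_sum nv (\<lambda>a. Fm (a, g)) (carrier G) (conv G nv x y g)"
      using conv_hs[OF assms(1,3,4)] g Csub unfolding Fm_def by auto
    then show "nv_has_sum nv Fm ((\<lambda>a. (a, g)) ` carrier G) (conv G nv x y g)"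
      by (intro hs_reindex) (auto simp: inj_on_def)
  qed auto
  then have RHS: "nv_sum nv (conv G nv x y) C = \<Sigma>" by (rule nsum_eq)
  have blockA: "nv_has_sum nv Fm (A \<times> C) (nv_sum nv x A * nv_sum nv y (inv\<^bsub>G Mod N\<^esub> A \<otimes>\<^bsub>G Mod N\<^esub> C))"
    if A: "A \<in> carrier (G Mod N)" for A
  proof -
    define C' where "C' = inv\<^bsub>G Mod N\<^esub> A \<otimes>\<^bsub>G Mod N\<^esub> C"
    have iA: "inv\<^bsub>G Mod N\<^esub> A \<in> carrier (G Mod N)" by (rule group.inv_closed[OF grpH A])
    have C'H: "C' \<in> carrier (G Mod N)" unfolding C'_def
      by (rule monoid.m_closed[OF group.is_monoid[OF grpH] iA assms(5)])
    have Asub: "A \<subseteq> carrier G" using coset_facts(1)[OF assms(1,2) A] .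
    have C'sub: "C' \<subseteq> carrier G" using coset_facts(1)[OF assms(1,2) C'H] .
    have ACsub: "A \<times> C \<subseteq> carrier G \<times> C" using Asub by auto
    have sA: "nv_has_sum nv Fm (A \<times> C) (nv_sum nv Fm (A \<times> C))"
      by (rule hs_nsum[OF c0on_subset[OF c0F ACsub]])
    define sA where "sA = nv_sum nv Fm (A \<times> C)"
    have sA: "nv_has_sum nv Fm (A \<times> C) sA" using sA unfolding sA_def .
    have hy: "nv_has_sum nv y C' (nv_sum nv y C')"
      by (rule hs_nsum[OF c0on_subset[OF assms(4) C'sub]])
    have hx: "nv_has_sum nv x A (nv_sum nv x A)"
      by (rule hs_nsum[OF c0on_subset[OF assms(3) Asub]])
    have rows: "nv_has_sum nv Fm ((\<lambda>g. (a, g)) ` C) (x a * nv_sum nv y C')" if a: "a \<in> A" for a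
    proof -
      have aG: "a \<in> carrier G" using a Asub by auto
      have img: "(\<lambda>b. a \<otimes> b) ` C' = C" unfolding C'_def by (rule coset_shift[OF assms(1,2) A assms(5) a])
      have "nv_has_sum nv (\<lambda>g. y (inv a \<otimes> g)) ((\<lambda>b. a \<otimes> b) ` C') (nv_sum nv y C')"
      proof (rule hs_reindex)
        show "inj_on (\<lambda>b. a \<otimes> b) C'"
        proof (rule inj_onI)
          fix u v assume uv: "u \<in> C'" "v \<in> C'" "a \<otimes> u = a \<otimes> v"
          then have "u \<in> carrier G" "v \<in> carrier G" using C'sub by auto
          then show "u = v" using uv(3) aG l_cancel by blast
        qed
        show "nv_has_sum nv (\<lambda>b. y (inv a \<otimes> (a \<otimes> b))) C' (nv_sum nv y C')"
          by (rule hs_cong[OF _ hy]) (use C'sub aG in \<open>auto simp: m_assoc[symmetric]\<close>)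
      qed
      then have "nv_has_sum nv (\<lambda>g. y (inv a \<otimes> g)) C (nv_sum nv y C')" using img by simp
      then have "nv_has_sum nv (\<lambda>g. x a * y (inv a \<otimes> g)) C (x a * nv_sum nv y C')" by (rule hs_cmult)
      then show ?thesis by (intro hs_reindex) (auto simp: inj_on_def Fm_def)
    qed
    have "nv_has_sum nv (\<lambda>a. x a * nv_sum nv y C') A sA"
      by (rule hs_partition[where P = "\<lambda>a. (\<lambda>g. (a, g)) ` C", OF sA rows]) auto
    moreover have "nv_has_sum nv (\<lambda>a. x a * nv_sum nv y C') A (nv_sum nv x A * nv_sum nv y C')"
      using hs_cmult[OF hx, of "nv_sum nv y C'"] by (simp add: mult.commute)
    ultimately have "sA = nv_sum nv x A * nv_sum nv y C'" by (rule hs_unique)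
    then show ?thesis using sA unfolding C'_def by simp
  qed
  have "nv_has_sum nv (\<lambda>A. nv_sum nv x A * nv_sum nv y (inv\<^bsub>G Mod N\<^esub> A \<otimes>\<^bsub>G Mod N\<^esub> C)) (carrier (G Mod N)) \<Sigma>"
  proof (rule hs_partition[where P = "\<lambda>A. A \<times> C", OF \<Sigma> blockA])
    fix A assume "A \<in> carrier (G Mod N)"
    then show "A \<times> C \<subseteq> carrier G \<times> C" using coset_facts(1)[OF assms(1,2)] by blast
  next
    fix A B assume AB: "A \<in> carrier (G Mod N)" "B \<in> carrier (G Mod N)" "A \<noteq> B"
    have "disjnt A B" using rcos_disjoint[OF subgroup_axioms] AB
      unfolding pairwise_def by (simp add: FactGroup_def)
    then show "A \<times> C \<inter> B \<times> C = {}" unfolding disjnt_def by auto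
  next
    show "carrier G \<times> C \<subseteq> \<Union>((\<lambda>A. A \<times> C) ` carrier (G Mod N))"
    proof
      fix z assume "z \<in> carrier G \<times> C"
      then obtain a g where z: "z = (a, g)" "a \<in> carrier G" "g \<in> C" by auto
      have "N #> a \<in> carrier (G Mod N)" using z(2) by (simp add: FactGroup_def rcosetsI subset)
      moreover have "a \<in> N #> a" using z(2) by (simp add: rcos_self subgroup_axioms)
      ultimately show "z \<in> \<Union>((\<lambda>A. A \<times> C) ` carrier (G Mod N))" using z by blast
    qed
  qed
  then have "conv (G Mod N) nv (\<lambda>A. nv_sum nv x A) (\<lambda>A. nv_sum nv y A) C = \<Sigma>"
    unfolding conv_def using assms(5) nsum_eq by simp
  then show ?thesis using RHS by simp
qed

lemma mpow_hom:
  fixes G :: "('g, 'c) monoid_scheme" (structure)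
  assumes "group G" "N \<lhd> G" "\<And>i j. i < r \<Longrightarrow> j < r \<Longrightarrow> c0on nv (D i j) (carrier G)"
    "\<And>C i j. C \<in> carrier (G Mod N) \<Longrightarrow> i < r \<Longrightarrow> j < r \<Longrightarrow> DH i j C = nv_sum nv (D i j) C"
  shows "C \<in> carrier (G Mod N) \<Longrightarrow> i < r \<Longrightarrow> j < r \<Longrightarrow>
    mpow (G Mod N) nv r DH n i j C = nv_sum nv (mpow G nv r D n i j) C"
proof (induction n arbitrary: C i j)
  case 0
  then show ?case using nsum_eq[OF R_mone[OF assms(1,2) 0(1)]] by simp
next
  case (Suc n)
  interpret normal N G by fact
  have grpH: "group (G Mod N)" by (rule factorgroup_is_group)
  have Csub: "C \<subseteq> carrier G" using coset_facts(1)[OF assms(1,2) Suc(2)] .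
  have mc0: "\<And>i j. i < r \<Longrightarrow> j < r \<Longrightarrow> c0on nv (mpow G nv r D n i j) (carrier G)"
    by (rule mpow_c0[OF assms(1,3)])
  have "mpow (G Mod N) nv r DH (Suc n) i j C =
      (\<Sum>k<r. conv (G Mod N) nv (mpow (G Mod N) nv r DH n i k) (DH k j) C)"
    by (simp add: mmul_def)
  also have "\<dots> = (\<Sum>k<r. conv (G Mod N) nv (\<lambda>A. nv_sum nv (mpow G nv r D n i k) A) (\<lambda>A. nv_sum nv (D k j) A) C)"
    by (rule sum.cong[OF refl], rule conv_cong[OF grpH]) (use Suc assms(4) in auto)
  also have "\<dots> = (\<Sum>k<r. nv_sum nv (conv G nv (mpow G nv r D n i k) (D k j)) C)"
    by (rule sum.cong[OF refl], rule R_hom[OF assms(1,2)]) (use Suc mc0 assms(3) in auto)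
  also have "\<dots> = nv_sum nv (\<lambda>g. \<Sum>k<r. conv G nv (mpow G nv r D n i k) (D k j) g) C"
  proof (rule nsum_eq[symmetric], rule hs_sum)
    fix k assume "k \<in> {..<r}"
    then have "c0on nv (conv G nv (mpow G nv r D n i k) (D k j)) C"
      using Suc mc0 assms(3) Csub by (intro c0on_subset[OF conv_c0[OF assms(1)]]) auto
    then show "nv_has_sum nv (conv G nv (mpow G nv r D n i k) (D k j)) C (nv_sum nv (conv G nv (mpow G nv r D n i k) (D k j)) C)"
      by (rule hs_nsum)
  qed simp
  also have "\<dots> = nv_sum nv (mpow G nv r D (Suc n) i j) C" by (simp only: mpow_Suc_fun)
  finally show ?case .
qed

end



lemma padic_nvf: "padic_field p nv \<Longrightarrow> nvf nv"
  unfolding nvf_def padic_field_def by blast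

locale padic = nvf nv for nv :: "'a::field_char_0 \<Rightarrow> real" +
  fixes p :: nat
  assumes pf: "padic_field p nv"
begin

lemma p_prime: "Factorial_Ring.prime p" using pf unfolding padic_field_def by simp
lemma p_ge2: "p \<ge> 2" using prime_ge_2_nat[OF p_prime] .
lemma nvp: "nv (of_nat p) = 1 / real p" using pf unfolding padic_field_def by simp

lemma nv_coprime:
  assumes "\<not> p dvd k"
  shows "nv (of_nat k :: 'a) = 1"
proof -
  have k0: "k \<noteq> 0" using assms by (metis dvd_0_right)
  have "coprime p k" using prime_imp_coprime[OF p_prime assms] .
  then have g: "gcd k p = 1" by (simp add: coprime_iff_gcd_eq_1 gcd.commute)
  obtain x y where xy: "k * x = p * y + gcd k p" using bezout_nat[OF k0, of p] by blast
  then have "k * x = p * y + 1" using g by simp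
  then have "(of_nat k * of_nat x :: 'a) = of_nat p * of_nat y + 1"
    by (metis of_nat_1 of_nat_add of_nat_mult)
  then have "(1::'a) = of_nat k * of_nat x - of_nat p * of_nat y" by (simp add: algebra_simps)
  then have "nv (1::'a) \<le> max (nv (of_nat k * of_nat x :: 'a)) (nv (of_nat p * of_nat y :: 'a))"
    using nv_diff by metis
  then have "1 \<le> max (nv (of_nat k :: 'a) * nv (of_nat x :: 'a)) (1 / real p * nv (of_nat y :: 'a))"
    by (simp add: nmul nvp)
  moreover have "nv (of_nat k :: 'a) * nv (of_nat x :: 'a) \<le> nv (of_nat k :: 'a)"
    using nv_of_nat_le[of x] nn[of "of_nat k"] by (simp add: mult_left_le)
  moreover have "1 / real p * nv (of_nat y :: 'a) \<le> 1 / real p"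
    using nv_of_nat_le[of y] p_ge2 by (simp add: divide_le_eq)
  moreover have "1 / real p < 1" using p_ge2 by simp
  ultimately have "1 \<le> nv (of_nat k :: 'a)" by (auto simp: max_def split: if_split_asm)
  then show ?thesis using nv_of_nat_le[of k] by simp
qed

lemma nv_nat_ge: "k \<ge> 1 \<Longrightarrow> nv (of_nat k :: 'a) \<ge> 1 / real k"
proof (induction k rule: less_induct)
  case (less k)
  show ?case
  proof (cases "p dvd k")
    case False
    then show ?thesis using nv_coprime less.prems by simp
  next
    case True
    then obtain m where m: "k = p * m" by blast
    have m1: "m \<ge> 1" using less.prems m by (cases m) auto
    have mk: "m < k" using m m1 p_ge2 by simp
    have IH: "nv (of_nat m :: 'a) \<ge> 1 / real m" using less.IH[OF mk m1] .
    have "nv (of_nat k :: 'a) = 1 / real p * nv (of_nat m :: 'a)" using m by (simp add: nmul nvp)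
    also have "\<dots> \<ge> 1 / real p * (1 / real m)" using IH p_ge2 by (intro mult_left_mono) auto
    finally show ?thesis using m by simp
  qed
qed

lemma nv_div_nat: "nv (u / of_nat k) \<le> real k * nv u"
proof (cases "k = 0")
  case True then show ?thesis by simp
next
  case False
  then have k: "nv (of_nat k :: 'a) \<ge> 1 / real k" using nv_nat_ge by simp
  have pos: "1 / real k > 0" using False by simp
  have kpos: "nv (of_nat k :: 'a) > 0" using k pos by linarith
  have "nv (u / of_nat k) = nv u / nv (of_nat k)" by (rule nv_div)
  also have "\<dots> \<le> nv u / (1 / real k)" using k pos nn[of u] kpos by (intro divide_left_mono) auto
  finally show ?thesis by (simp add: mult.commute)
qed

lemma small_eventually:
  assumes "e > 0"
  shows "\<exists>M. \<forall>k\<ge>M. real k * (1 / real p) ^ k < e"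
proof -
  have "norm (1 / real p) < 1" using p_ge2 by simp
  then have "(\<lambda>k. of_nat k * (1 / real p) ^ k) \<longlonglongrightarrow> 0" by (rule powser_times_n_limit_0)
  then obtain M where "\<forall>k\<ge>M. norm (of_nat k * (1 / real p) ^ k - 0) < e"
    using LIMSEQ_D assms by blast
  then show ?thesis by auto
qed

lemma ser_conv:
  assumes "\<And>k. nv (u k) \<le> (1 / real p) ^ k"
  shows "\<exists>L. nv_tendsto nv (\<lambda>n. - (\<Sum>k\<in>{1..n}. u k / of_nat k)) L"
proof -
  have "\<exists>L. nv_tendsto nv (\<lambda>n. \<Sum>k\<in>{1..n}. - (u k / of_nat k)) L"
  proof (rule series_conv)
    fix e :: real assume "e > 0"
    then obtain M where M: "\<And>k. k \<ge> M \<Longrightarrow> real k * (1 / real p) ^ k < e" using small_eventually by blast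
    have "nv (- (u k / of_nat k)) < e" if "k \<ge> M" for k
    proof -
      have "nv (- (u k / of_nat k)) \<le> real k * nv (u k)" using nv_div_nat by simp
      also have "\<dots> \<le> real k * (1 / real p) ^ k" using assms by (intro mult_left_mono) auto
      finally show ?thesis using M[OF that] by simp
    qed
    then show "\<exists>M. \<forall>k\<ge>M. nv (- (u k / of_nat k)) < e" by blast
  qed
  then show ?thesis by (simp add: sum_negf)
qed

lemma hs_remove:
  assumes "nv_has_sum nv f S s" "x \<in> S"
  shows "nv_has_sum nv f (S - {x}) (s - f x)"
  unfolding nv_has_sum_def
proof (intro allI impI)
  fix e :: real assume e: "e > 0"
  obtain F0 where F0: "finite F0" "F0 \<subseteq> S" "\<And>F. finite F \<and> F0 \<subseteq> F \<and> F \<subseteq> S \<Longrightarrow> nv (sum f F - s) < e"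
    by (rule hsD[OF assms(1) e]) blast
  show "\<exists>F0. finite F0 \<and> F0 \<subseteq> S - {x} \<and> (\<forall>F. finite F \<and> F0 \<subseteq> F \<and> F \<subseteq> S - {x} \<longrightarrow> nv (sum f F - (s - f x)) < e)"
  proof (intro exI[of _ "F0 - {x}"] conjI allI impI)
    fix F assume F: "finite F \<and> F0 - {x} \<subseteq> F \<and> F \<subseteq> S - {x}"
    have "sum f (insert x F) = f x + sum f F" using F by (subst sum.insert) auto
    moreover have "nv (sum f (insert x F) - s) < e" using F0(3)[of "insert x F"] F assms(2) by auto
    ultimately show "nv (sum f F - (s - f x)) < e" by (simp add: algebra_simps)
  qed (use F0 in auto)
qed

end



lemma mminus_fun: "mminus A B i j = (\<lambda>g. A i j g - B i j g)"
  by (rule ext) (simp add: mminus_def)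

lemma (in nvf) tendsto_lim: "\<exists>L. nv_tendsto nv xs L \<Longrightarrow> nv_tendsto nv xs (nv_lim nv xs)"
  using lim_eq by auto

theorem proposition4p16:
  fixes G :: "('g, 'c) monoid_scheme" and \<Gamma>s :: "nat \<Rightarrow> 'g set"
    and p :: nat and nv :: "'a::field_char_0 \<Rightarrow> real" and r :: nat
    and f :: "('g, 'a) gmat"
  assumes "group G" and "countable (carrier G)" and "residually_finite G"
    and "tends_to_e G \<Gamma>s"
    and "padic_field p nv"
    and "one_plus_p_int p G nv r f"
  shows "nv_tendsto nv (\<lambda>n. log_det (G Mod \<Gamma>s n) nv r (mreduce nv f)) (log_det G nv r f)"
proof -
  interpret nvf nv by (rule padic_nvf[OF assms(5)])
  interpret padic nv p
    using padic_nvf[OF assms(5)] assms(5) by (simp add: padic_def padic_axioms_def)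
  interpret group G by (rule assms(1))
  define q where "q = 1 / real p"
  have q0: "0 \<le> q" unfolding q_def by simp
  obtain A where A: "\<forall>i<r. \<forall>j<r. c0 G nv (A i j) \<and> (\<forall>g. nv (A i j g) \<le> 1)
      \<and> (\<forall>g. f i j g = mone G i j g + of_nat p * A i j g)"
    using assms(6) unfolding one_plus_p_int_def by blast
  define D where "D = mminus (mone G) f"
  have Dform: "D i j g = - (of_nat p) * A i j g" if "i < r" "j < r" for i j g
    using A that by (simp add: D_def mminus_def)
  have Ac0: "c0on nv (A i j) (carrier G)" if "i < r" "j < r" for i j
    using A that unfolding c0_def c0on_def by simp
  have Dc0: "c0on nv (D i j) (carrier G)" if "i < r" "j < r" for i j
    by (rule c0on_cong[OF c0on_cmult[OF Ac0[OF that], of "- of_nat p"]]) (use Dform that in simp)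
  have Dbd: "nv (D i j g) \<le> q" if "i < r" "j < r" "g \<in> carrier G" for i j g
  proof -
    have "nv (D i j g) = 1 / real p * nv (A i j g)" using Dform[OF that(1,2)] by (simp add: nmul nvp)
    also have "\<dots> \<le> 1 / real p * 1" using A that by (intro mult_left_mono) auto
    finally show ?thesis unfolding q_def by simp
  qed
  have fc0: "c0on nv (f i j) (carrier G)" if "i < r" "j < r" for i j
    by (rule c0on_cong[OF c0on_add[OF mone_c0 c0on_cmult[OF Ac0[OF that], of "of_nat p"]]])
      (use A that in simp)
  have mc0: "c0on nv (mpow G nv r D k i j) (carrier G)" if "i < r" "j < r" for i j k
    by (rule mpow_c0[OF assms(1) Dc0 that])
  have mbd: "nv (mpow G nv r D k i j g) \<le> q ^ k" if "i < r" "j < r" "g \<in> carrier G" for i j k g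
    by (rule mpow_bound[OF assms(1) Dc0 q0 Dbd that])
  have normal: "\<Gamma>s n \<lhd> G" for n using assms(4) unfolding tends_to_e_def by blast
  have Nsub: "\<Gamma>s n \<subseteq> carrier G" for n
    using normal_imp_subgroup[OF normal[of n]] subgroup.subset by blast
  have oneN: "\<one>\<^bsub>G\<^esub> \<in> \<Gamma>s n" for n
    using normal_imp_subgroup[OF normal[of n]] subgroup.one_closed by blast
  define T where "T i k = mpow G nv r D k i i \<one>\<^bsub>G\<^esub>" for i k
  define TN where "TN n i k = nv_sum nv (mpow G nv r D k i i) (\<Gamma>s n)" for n i k
  have hsN: "nv_has_sum nv (mpow G nv r D k i i) (\<Gamma>s n) (TN n i k)" if "i < r" for n i k
    unfolding TN_def by (rule hs_nsum[OF c0on_subset[OF mc0[OF that that] Nsub]])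
  have Tbd: "nv (T i k) \<le> q ^ k" if "i < r" for i k
    unfolding T_def using mbd[OF that that] by simp
  have TNbd: "nv (TN n i k) \<le> q ^ k" if "i < r" for n i k
    by (rule hs_bound[OF hsN[OF that]]) (use q0 mbd[OF that that] Nsub in auto)
  have LG: "log_det G nv r f = (\<Sum>i<r. nv_lim nv (\<lambda>m. - (\<Sum>k\<in>{1..m}. T i k / of_nat k)))"
    unfolding log_det_def trG_def mlog_def T_def D_def by simp
  have LH: "log_det (G Mod \<Gamma>s n) nv r (mreduce nv f) =
      (\<Sum>i<r. nv_lim nv (\<lambda>m. - (\<Sum>k\<in>{1..m}. TN n i k / of_nat k)))" for n
  proof -
    define H where "H = G Mod \<Gamma>s n"
    define DH where "DH = mminus (mone H) (mreduce nv f)"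
    have DHeq: "DH i j C = nv_sum nv (D i j) C" if C: "C \<in> carrier H" "i < r" "j < r" for C i j
    proof -
      have Csub: "C \<subseteq> carrier G" using coset_facts(1)[OF assms(1) normal C(1)[unfolded H_def]] .
      have "nv_has_sum nv (\<lambda>g. mone G i j g - f i j g) C (mone H i j C - nv_sum nv (f i j) C)"
        unfolding H_def
        by (rule hs_diff[OF R_mone[OF assms(1) normal C(1)[unfolded H_def]] hs_nsum[OF c0on_subset[OF fc0[OF C(2,3)] Csub]]])
      then have "nv_sum nv (\<lambda>g. mone G i j g - f i j g) C = mone H i j C - nv_sum nv (f i j) C"
        by (rule nsum_eq)
      then show ?thesis by (simp add: DH_def D_def mminus_fun mreduce_def)
    qed
    have grpH: "group H" unfolding H_def by (rule normal.factorgroup_is_group[OF normal])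
    have one_in: "\<Gamma>s n \<in> carrier H"
      using monoid.one_closed[OF group.is_monoid[OF grpH]] unfolding H_def by simp
    have mp: "mpow H nv r DH k i i (\<Gamma>s n) = TN n i k" if "i < r" for i k
      using mpow_hom[OF assms(1) normal Dc0 DHeq[unfolded H_def], where C = "\<Gamma>s n" and i = i and j = i and n = k] one_in that
      unfolding TN_def H_def DH_def by simp
    have "log_det H nv r (mreduce nv f) =
        (\<Sum>i<r. nv_lim nv (\<lambda>m. - (\<Sum>k\<in>{1..m}. mpow H nv r DH k i i (\<Gamma>s n) / of_nat k)))"
      unfolding log_det_def trG_def mlog_def DH_def H_def by simp
    also have "\<dots> = (\<Sum>i<r. nv_lim nv (\<lambda>m. - (\<Sum>k\<in>{1..m}. TN n i k / of_nat k)))"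
      by (rule sum.cong) (simp_all add: mp)
    finally show ?thesis unfolding H_def .
  qed
  have tG: "nv_tendsto nv (\<lambda>m. \<Sum>i<r. - (\<Sum>k\<in>{1..m}. T i k / of_nat k)) (log_det G nv r f)"
    unfolding LG
  proof (rule tendsto_sum)
    fix i assume "i \<in> {..<r}"
    then show "nv_tendsto nv (\<lambda>m. - (\<Sum>k\<in>{1..m}. T i k / of_nat k)) (nv_lim nv (\<lambda>m. - (\<Sum>k\<in>{1..m}. T i k / of_nat k)))"
      using Tbd unfolding q_def by (intro tendsto_lim ser_conv) auto
  qed simp
  have tH: "nv_tendsto nv (\<lambda>m. \<Sum>i<r. - (\<Sum>k\<in>{1..m}. TN n i k / of_nat k)) (log_det (G Mod \<Gamma>s n) nv r (mreduce nv f))" for n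
    unfolding LH
  proof (rule tendsto_sum)
    fix i assume "i \<in> {..<r}"
    then show "nv_tendsto nv (\<lambda>m. - (\<Sum>k\<in>{1..m}. TN n i k / of_nat k)) (nv_lim nv (\<lambda>m. - (\<Sum>k\<in>{1..m}. TN n i k / of_nat k)))"
      using TNbd unfolding q_def by (intro tendsto_lim ser_conv) auto
  qed simp
  show ?thesis unfolding nv_tendsto_def
  proof (rule LIMSEQ_I)
    fix e :: real assume e: "e > 0"
    have e2: "e / 2 > 0" using e by simp
    obtain M0 where M0: "\<And>k. k \<ge> M0 \<Longrightarrow> real k * q ^ k < e / 2"
      using small_eventually[OF e2] unfolding q_def by blast
    define M where "M = max M0 1"
    have M1: "real M \<ge> 1" unfolding M_def by simp
    define \<delta> where "\<delta> = e / (2 * real M)"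
    have \<delta>: "\<delta> > 0" unfolding \<delta>_def using e M1 by simp
    have M\<delta>: "real M * \<delta> = e / 2" unfolding \<delta>_def using M1 by simp
    define Bd where "Bd = {g \<in> carrier G. g \<noteq> \<one>\<^bsub>G\<^esub> \<and> (\<exists>k<M. \<exists>i<r. \<delta> \<le> nv (mpow G nv r D k i i g))}"
    have "Bd \<subseteq> (\<Union>k<M. \<Union>i<r. {g \<in> carrier G. \<delta> \<le> nv (mpow G nv r D k i i g)})"
      unfolding Bd_def by blast
    moreover have "finite (\<Union>k<M. \<Union>i<r. {g \<in> carrier G. \<delta> \<le> nv (mpow G nv r D k i i g)})"
      using mc0 \<delta> unfolding c0on_def by auto
    ultimately have Bdfin: "finite Bd" using finite_subset by blast
    define Z where "Z = (\<Union>g\<in>Bd. {n. g \<in> \<Gamma>s n})"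
    have "finite {n. g \<in> \<Gamma>s n}" if "g \<in> Bd" for g
      using assms(4) that unfolding tends_to_e_def Bd_def by blast
    then have "finite Z" unfolding Z_def using Bdfin by blast
    then obtain N0 where N0: "Z \<subseteq> {..<N0}" using finite_nat_bounded by blast
    show "\<exists>no. \<forall>n\<ge>no. norm (nv (log_det (G Mod \<Gamma>s n) nv r (mreduce nv f) - log_det G nv r f) - 0) < e"
    proof (intro exI allI impI)
      fix n assume n: "n \<ge> N0"
      have key: "nv ((T i k - TN n i k) / of_nat k) \<le> e / 2" if i: "i < r" for i k
      proof (cases "k \<ge> M")
        case True
        have "nv (T i k - TN n i k) \<le> q ^ k"
          using nv_diff[of "T i k" "TN n i k"] Tbd[OF i, of k] TNbd[OF i, of n k] by simp
        then have "real k * nv (T i k - TN n i k) \<le> real k * q ^ k" by (intro mult_left_mono) auto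
        moreover have "real k * q ^ k < e / 2" using M0 True unfolding M_def by simp
        ultimately show ?thesis using nv_div_nat[of "T i k - TN n i k" k] by simp
      next
        case False
        have hs: "nv_has_sum nv (mpow G nv r D k i i) (\<Gamma>s n - {\<one>\<^bsub>G\<^esub>}) (TN n i k - T i k)"
          using hs_remove[OF hsN[OF i] oneN] unfolding T_def by simp
        have "nv (TN n i k - T i k) \<le> \<delta>"
        proof (rule hs_bound[OF hs])
          show "0 \<le> \<delta>" using \<delta> by simp
          fix g assume g: "g \<in> \<Gamma>s n - {\<one>\<^bsub>G\<^esub>}"
          have gG: "g \<in> carrier G" using g Nsub by auto
          have "g \<notin> Bd"
          proof
            assume "g \<in> Bd"
            then have "n \<in> Z" unfolding Z_def using g by auto
            then show False using N0 n by auto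
          qed
          moreover have "g \<in> Bd" if "\<delta> \<le> nv (mpow G nv r D k i i g)"
          proof -
            have "k < M" using False by simp
            then show ?thesis unfolding Bd_def using gG g i that by blast
          qed
          ultimately show "nv (mpow G nv r D k i i g) \<le> \<delta>" by linarith
        qed
        then have a: "nv (T i k - TN n i k) \<le> \<delta>" using nv_diff_sym by metis
        have "nv ((T i k - TN n i k) / of_nat k) \<le> real k * nv (T i k - TN n i k)" by (rule nv_div_nat)
        also have "\<dots> \<le> real M * \<delta>"
          using a False nn[of "T i k - TN n i k"] \<delta> by (intro mult_mono) auto
        finally show ?thesis using M\<delta> by simp
      qed
      have bound: "nv ((\<Sum>i<r. - (\<Sum>k\<in>{1..m}. TN n i k / of_nat k)) - (\<Sum>i<r. - (\<Sum>k\<in>{1..m}. T i k / of_nat k))) \<le> e / 2" for m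
      proof -
        have "(\<Sum>i<r. - (\<Sum>k\<in>{1..m}. TN n i k / of_nat k)) - (\<Sum>i<r. - (\<Sum>k\<in>{1..m}. T i k / of_nat k))
            = (\<Sum>i<r. \<Sum>k\<in>{1..m}. (T i k - TN n i k) / of_nat k)"
          by (simp add: sum_subtractf diff_divide_distrib sum_negf)
        also have "nv \<dots> \<le> e / 2"
          using key e2 by (intro nv_sum_le) (auto intro!: nv_sum_le)
        finally show ?thesis .
      qed
      have "nv (log_det (G Mod \<Gamma>s n) nv r (mreduce nv f) - log_det G nv r f) \<le> e / 2"
        by (rule tendsto_le[OF tH tG bound])
      then show "norm (nv (log_det (G Mod \<Gamma>s n) nv r (mreduce nv f) - log_det G nv r f) - 0) < e"
        using nn e by simp
    qed
  qed
qed



end
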